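(* Let $X$ be a compact metric space and $(f_n)_{n\ge1}$ a sequence of continuous maps $X\to X$ converging uniformly to a function $\phi\colon X\to X$. Then $\phi^q\circ f_1^p=f_1^{p+q}$ for every $p\in\mathbb{N}^*$ and every $q\in\beta(\mathbb{N})$. In particular, the Ellis semigroup $E(X,\phi)$ acts on $E(X,f_{1,\infty})^*$: $h\circ g\in E(X,f_{1,\infty})^*$ for all $h\in E(X,\phi)$ and $g\in E(X,f_{1,\infty})^*$.
   Context: $\mathbb{N}=\{1,2,\dots\}$, $\beta(\mathbb{N})$ the ultrafilters on $\mathbb{N}$ (principal ones identified with $n\in\mathbb{N}$), $\mathbb{N}^*$ the free ones. For $r\in\mathbb{N}^*$, $r\text{-}\lim_n x_n$ is the unique $y$ with $\{n:x_n\in V\}\in r$ for all neighbourhoods $V$ of $y$. $f_1^n=f_n\circ\cdots\circ f_1$, $f_1^r(x)=r\text{-}\lim_n f_1^n(x)$ for $r\in\mathbb{N}^*$, $E(X,f_{1,\infty})^*=\{f_1^r:r\in\mathbb{N}^*\}$. $\phi^n$ is the $n$-fold composition, $\phi^q(x)=q\text{-}\lim_n\phi^n(x)$ for $q\in\mathbb{N}^*$, and $E(X,\phi)$ is the closure of $\{\phi^n:n\in\mathbb{N}\}$ in $X^X$ (pointwise topology), which equals $\{\phi^q:q\in\beta(\mathbb{N})\}$. Addition on $\beta(\mathbb{N})$: $p+q=\{A:\{n:\{m:m+n\in A\}\in p\}\in q\}$. *)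

theory Defs
  imports "HOL-Analysis.Analysis"
begin

text \<open>Ultrafilters on \<open>\<nat> = {1,2,...}\<close>, represented as filters on type nat that
  contain the set of positive integers.  The principal ultrafilter at n is
  \<open>principal {n}\<close>.\<close>
definition betaN :: "nat filter set" where
  "betaN = {F. F \<noteq> bot \<and> (\<forall>P. eventually P F \<or> eventually (\<lambda>n. \<not> P n) F)
               \<and> eventually (\<lambda>n. n \<ge> 1) F}"

definition betaN_star :: "nat filter set" where
  "betaN_star = {F \<in> betaN. \<forall>n. eventually (\<lambda>m. m \<noteq> n) F}"

definition ultra_add :: "nat filter \<Rightarrow> nat filter \<Rightarrow> nat filter" where
  "ultra_add p q = Abs_filter (\<lambda>A. eventually (\<lambda>n. eventually (\<lambda>m. A (m + n)) p) q)"

primrec fcomp :: "(nat \<Rightarrow> 'a \<Rightarrow> 'a) \<Rightarrow> nat \<Rightarrow> 'a \<Rightarrow> 'a" where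
  "fcomp f 0 = id"
| "fcomp f (Suc n) = f (Suc n) \<circ> fcomp f n"

definition fpow :: "(nat \<Rightarrow> 'a::t2_space \<Rightarrow> 'a) \<Rightarrow> nat filter \<Rightarrow> 'a \<Rightarrow> 'a" where
  "fpow f r x = Lim r (\<lambda>n. fcomp f n x)"

definition phipow :: "('a::t2_space \<Rightarrow> 'a) \<Rightarrow> nat filter \<Rightarrow> 'a \<Rightarrow> 'a" where
  "phipow \<phi> q x = Lim q (\<lambda>n. (\<phi> ^^ n) x)"

text \<open>Ellis semigroup \<open>E(X,\<phi>)\<close>: closure of {\<phi>^n : n \<ge> 1} in X^X with the
  pointwise topology.  Maps X \<rightarrow> X are represented by functions whose values
  outside X are irrelevant.\<close>
definition ellis_phi :: "'a::metric_space set \<Rightarrow> ('a \<Rightarrow> 'a) \<Rightarrow> ('a \<Rightarrow> 'a) set" where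
  "ellis_phi X \<phi> = {h. (\<forall>x\<in>X. h x \<in> X) \<and>
     (\<forall>F e. finite F \<and> F \<subseteq> X \<and> e > 0 \<longrightarrow>
        (\<exists>n\<ge>1. \<forall>x\<in>F. dist (h x) ((\<phi> ^^ n) x) < e))}"

definition ellis_star :: "'a::metric_space set \<Rightarrow> (nat \<Rightarrow> 'a \<Rightarrow> 'a) \<Rightarrow> ('a \<Rightarrow> 'a) set" where
  "ellis_star X f = {g. \<exists>r\<in>betaN_star. \<forall>x\<in>X. g x = fpow f r x}"

end

theory Submission imports Defs begin

lemma ultra_add_is_filter:
  fixes p q :: "nat filter"
  shows "is_filter (\<lambda>A. eventually (\<lambda>n. eventually (\<lambda>m. A (m + n)) p) q)"
proof (rule is_filter.intro)
  show "\<forall>\<^sub>F n in q. \<forall>\<^sub>F m in p. True" by simp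
next
  fix P Q :: "nat \<Rightarrow> bool"
  assume "\<forall>\<^sub>F n in q. \<forall>\<^sub>F m in p. P (m + n)" "\<forall>\<^sub>F n in q. \<forall>\<^sub>F m in p. Q (m + n)"
  then show "\<forall>\<^sub>F n in q. \<forall>\<^sub>F m in p. P (m + n) \<and> Q (m + n)"
  proof -
    have "\<forall>\<^sub>F n in q. (\<forall>\<^sub>F m in p. P (m + n)) \<and> (\<forall>\<^sub>F m in p. Q (m + n))"
      using \<open>\<forall>\<^sub>F n in q. \<forall>\<^sub>F m in p. P (m + n)\<close> \<open>\<forall>\<^sub>F n in q. \<forall>\<^sub>F m in p. Q (m + n)\<close>
      by (rule eventually_conj)
    then show ?thesis by (rule eventually_mono) (rule eventually_conj, blast+)
  qed
next
  fix P Q :: "nat \<Rightarrow> bool"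
  assume "\<forall>x. P x \<longrightarrow> Q x" "\<forall>\<^sub>F n in q. \<forall>\<^sub>F m in p. P (m + n)"
  then show "\<forall>\<^sub>F n in q. \<forall>\<^sub>F m in p. Q (m + n)"
  proof -
    have "\<And>n. (\<forall>\<^sub>F m in p. P (m + n)) \<Longrightarrow> (\<forall>\<^sub>F m in p. Q (m + n))"
      using \<open>\<forall>x. P x \<longrightarrow> Q x\<close> by (rule_tac eventually_mono) blast+
    then show ?thesis using \<open>\<forall>\<^sub>F n in q. \<forall>\<^sub>F m in p. P (m + n)\<close>
      by (rule_tac eventually_mono) blast+
  qed
qed

lemma eventually_ultra_add:
  "eventually P (ultra_add p q) \<longleftrightarrow> eventually (\<lambda>n. eventually (\<lambda>m. P (m + n)) p) q"
  unfolding ultra_add_def by (rule eventually_Abs_filter[OF ultra_add_is_filter])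

lemma ultra_add_not_bot:
  assumes "p \<noteq> bot" "q \<noteq> bot" shows "ultra_add p q \<noteq> bot"
  using assms by (simp add: trivial_limit_def eventually_ultra_add)

lemma tendsto_ultra_add:
  fixes a :: "nat \<Rightarrow> 'a::metric_space"
  assumes "\<And>n. ((\<lambda>m. a (m + n)) \<longlongrightarrow> b n) p" "(b \<longlongrightarrow> c) q"
  shows "(a \<longlongrightarrow> c) (ultra_add p q)"
proof (rule tendstoI)
  fix e :: real assume e: "e > 0"
  have "eventually (\<lambda>n. dist (b n) c < e/2) q" using assms(2) e tendstoD half_gt_zero by blast
  then show "eventually (\<lambda>k. dist (a k) c < e) (ultra_add p q)"
    unfolding eventually_ultra_add
  proof eventually_elim
    case (elim n)
    have "eventually (\<lambda>m. dist (a (m+n)) (b n) < e/2) p" using assms(1)[of n] e tendstoD half_gt_zero by blast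
    then show ?case
    proof eventually_elim
      case (elim m)
      have "dist (a (m+n)) c \<le> dist (a (m+n)) (b n) + dist (b n) c" by (rule dist_triangle)
      with elim \<open>dist (b n) c < e/2\<close> show ?case by linarith
    qed
  qed
qed

lemma ultra_lim_exists:
  fixes a :: "nat \<Rightarrow> 'a::metric_space"
  assumes X: "compact X" and p: "p \<noteq> bot" "\<And>P. eventually P p \<or> eventually (\<lambda>n. \<not> P n) p"
    and ev: "eventually (\<lambda>n. a n \<in> X) p"
  shows "\<exists>l\<in>X. (a \<longlongrightarrow> l) p"
proof -
  have "filtermap a p \<noteq> bot" using p by (simp add: filtermap_bot_iff)
  moreover have "eventually (\<lambda>x. x \<in> X) (filtermap a p)" using ev by (simp add: eventually_filtermap)
  ultimately obtain l where l: "l \<in> X" "inf (nhds l) (filtermap a p) \<noteq> bot"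
    using X unfolding compact_filter by blast
  have "(a \<longlongrightarrow> l) p"
  proof (rule topological_tendstoI)
    fix S assume S: "open S" "l \<in> S"
    show "eventually (\<lambda>n. a n \<in> S) p"
    proof (rule ccontr)
      assume "\<not> eventually (\<lambda>n. a n \<in> S) p"
      then have "eventually (\<lambda>n. a n \<notin> S) p" using p(2)[of "\<lambda>n. a n \<in> S"] by auto
      then have 1: "eventually (\<lambda>x. x \<notin> S) (filtermap a p)" by (simp add: eventually_filtermap)
      have 2: "eventually (\<lambda>x. x \<in> S) (nhds l)" using S by (rule eventually_nhds_in_open)
      have "eventually (\<lambda>x. False) (inf (nhds l) (filtermap a p))"
        unfolding eventually_inf using 1 2 by blast
      with l(2) show False by (simp add: trivial_limit_def)
    qed
  qed
  with l show ?thesis by blast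
qed

lemma free_ev:
  assumes "\<forall>n. eventually (\<lambda>m. m \<noteq> n) p" "eventually P sequentially"
  shows "eventually P p"
proof -
  obtain N where N: "\<And>n. n \<ge> N \<Longrightarrow> P n" using assms(2) by (auto simp: eventually_sequentially)
  have "eventually (\<lambda>m. \<forall>k\<in>{..<N}. m \<noteq> k) p"
    using assms(1) by (intro eventually_ball_finite) auto
  then show ?thesis by eventually_elim (metis N lessThan_iff not_le)
qed

primrec blk :: "(nat \<Rightarrow> 'a \<Rightarrow> 'a) \<Rightarrow> nat \<Rightarrow> nat \<Rightarrow> 'a \<Rightarrow> 'a" where
  "blk f m 0 = id"
| "blk f m (Suc k) = f (Suc (m + k)) \<circ> blk f m k"

lemma fcomp_blk: "fcomp f (m + k) = blk f m k \<circ> fcomp f m"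
  by (induction k) auto

lemma blk_in: "(\<And>n. n \<ge> 1 \<Longrightarrow> f n ` X \<subseteq> X) \<Longrightarrow> x \<in> X \<Longrightarrow> blk f m k x \<in> X"
  by (induction k) auto

lemma fcomp_in: "(\<And>n. n \<ge> 1 \<Longrightarrow> f n ` X \<subseteq> X) \<Longrightarrow> x \<in> X \<Longrightarrow> fcomp f k x \<in> X"
  by (induction k) auto

lemma funpow_in: "\<phi> ` X \<subseteq> X \<Longrightarrow> x \<in> X \<Longrightarrow> (\<phi> ^^ k) x \<in> X"
  by (induction k) auto

lemma funpow_cont: "\<phi> ` X \<subseteq> X \<Longrightarrow> continuous_on X \<phi> \<Longrightarrow> continuous_on X (\<phi> ^^ k)"
proof (induction k)
  case 0 then show ?case by (simp add: continuous_on_id)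
next
  case (Suc k)
  have "continuous_on X (\<phi> \<circ> (\<phi> ^^ k))"
    by (rule continuous_on_compose) (use Suc funpow_in[of \<phi> X] in \<open>auto intro: continuous_on_subset\<close>)
  then show ?case by simp
qed

lemma blk_unif:
  fixes f :: "nat \<Rightarrow> 'a::metric_space \<Rightarrow> 'a"
  assumes inX: "\<And>n. n \<ge> 1 \<Longrightarrow> f n ` X \<subseteq> X" and phX: "\<phi> ` X \<subseteq> X"
    and uc: "uniformly_continuous_on X \<phi>" and ul: "uniform_limit X f \<phi> sequentially"
  shows "e > 0 \<Longrightarrow> eventually (\<lambda>m. \<forall>x\<in>X. dist (blk f m k x) ((\<phi> ^^ k) x) < e) sequentially"
proof (induction k arbitrary: e)
  case 0 then show ?case by simp
next
  case (Suc k)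
  obtain d where d: "d > 0" "\<And>x y. x \<in> X \<Longrightarrow> y \<in> X \<Longrightarrow> dist y x < d \<Longrightarrow> dist (\<phi> y) (\<phi> x) < e/2"
    using uc Suc.prems unfolding uniformly_continuous_on_def by (meson half_gt_zero)
  obtain N1 where N1: "\<And>m. m \<ge> N1 \<Longrightarrow> \<forall>x\<in>X. dist (blk f m k x) ((\<phi> ^^ k) x) < d"
    using Suc.IH[OF d(1)] by (auto simp: eventually_sequentially)
  obtain N2 where N2: "\<And>n. n \<ge> N2 \<Longrightarrow> \<forall>x\<in>X. dist (f n x) (\<phi> x) < e/2"
    using ul Suc.prems unfolding uniform_limit_iff eventually_sequentially by (meson half_gt_zero)
  show ?case unfolding eventually_sequentially
  proof (intro exI[of _ "max N1 N2"] allI impI ballI)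
    fix m x assume m: "max N1 N2 \<le> m" and x: "x \<in> X"
    let ?y = "blk f m k x"
    have y: "?y \<in> X" using blk_in[OF inX x] .
    have pk: "(\<phi> ^^ k) x \<in> X" using funpow_in[OF phX x] .
    have a: "dist (f (Suc (m + k)) ?y) (\<phi> ?y) < e/2" using N2[of "Suc (m+k)"] m y by auto
    have b: "dist (\<phi> ?y) (\<phi> ((\<phi> ^^ k) x)) < e/2" using d(2)[OF pk y] N1[of m] m x by auto
    have "dist (f (Suc (m + k)) ?y) (\<phi> ((\<phi> ^^ k) x)) \<le> dist (f (Suc (m + k)) ?y) (\<phi> ?y) + dist (\<phi> ?y) (\<phi> ((\<phi> ^^ k) x))"
      by (rule dist_triangle)
    with a b show "dist (blk f m (Suc k) x) ((\<phi> ^^ Suc k) x) < e" by simp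
  qed
qed


lemma ex_ultra:
  fixes F :: "'a filter"
  assumes F: "F \<noteq> bot"
  shows "\<exists>U\<le>F. U \<noteq> bot \<and> (\<forall>P. eventually P U \<or> eventually (\<lambda>x. \<not> P x) U)"
proof -
  let ?R = "{(b, a). a \<noteq> bot \<and> a \<le> b \<and> b \<le> F}"
  have FR: "Field ?R = {G. G \<noteq> bot \<and> G \<le> F}"
    by (auto simp: Field_def bot_unique)
  have "\<exists>m\<in>Field ?R. \<forall>a\<in>Field ?R. (m, a) \<in> ?R \<longrightarrow> a = m"
  proof (rule Zorns_po_lemma)
    show "Partial_order ?R"
      by (auto simp: partial_order_on_def preorder_on_def
          antisym_def refl_on_def trans_def Field_def bot_unique)
    show "\<exists>u\<in>Field ?R. \<forall>a\<in>C. (a, u) \<in> ?R" if C: "C \<in> Chains ?R" for C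
    proof (simp add: FR, intro exI conjI ballI)
      have Inf_C: "Inf C \<noteq> bot" "Inf C \<le> F" if "C \<noteq> {}"
      proof -
        from C that have "Inf C = bot \<longleftrightarrow> (\<exists>x\<in>C. x = bot)"
          unfolding trivial_limit_def by (intro eventually_Inf_base) (auto simp: Chains_def)
        with C show "Inf C \<noteq> bot"
          by (auto simp: Chains_def)
        from that obtain x where "x \<in> C" by auto
        with C show "Inf C \<le> F"
          by (auto intro!: Inf_lower2[of x] simp: Chains_def)
      qed
      then have [simp]: "inf F (Inf C) = (if C = {} then F else Inf C)"
        using C by (auto simp add: inf_absorb2)
      from C show "inf F (Inf C) \<noteq> bot"
        by (simp add: F Inf_C)
      from C show "inf F (Inf C) \<le> F"
        by (simp add: Chains_def Inf_C F)
      with C show "inf F (Inf C) \<le> x" "x \<le> F" if "x \<in> C" for x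
        using that by (auto intro: Inf_lower simp: Chains_def)
    qed
  qed
  then obtain U where U: "U \<noteq> bot" "U \<le> F" and max: "\<And>G. G \<noteq> bot \<Longrightarrow> G \<le> U \<Longrightarrow> G = U"
    unfolding FR by auto
  have "eventually P U \<or> eventually (\<lambda>x. \<not> P x) U" for P
  proof (rule disjCI)
    assume "\<not> eventually (\<lambda>x. \<not> P x) U"
    then have "inf U (principal {x. P x}) \<noteq> bot"
      by (simp add: trivial_limit_def eventually_inf_principal)
    then have "inf U (principal {x. P x}) = U"
      using max inf_le1 by blast
    moreover have "eventually P (inf U (principal {x. P x}))"
      by (simp add: eventually_inf_principal)
    ultimately show "eventually P U" by simp
  qed
  with U show ?thesis by blast
qed


theorem theorem3p9:
  fixes X :: "'a::metric_space set"
    and f :: "nat \<Rightarrow> 'a \<Rightarrow> 'a"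
    and \<phi> :: "'a \<Rightarrow> 'a"
  assumes "compact X"
    and "\<And>n. n \<ge> 1 \<Longrightarrow> continuous_on X (f n)"
    and "\<And>n. n \<ge> 1 \<Longrightarrow> f n ` X \<subseteq> X"
    and "\<phi> ` X \<subseteq> X"
    and "uniform_limit X f \<phi> sequentially"
  shows "(\<forall>p\<in>betaN_star. \<forall>q\<in>betaN. \<forall>x\<in>X.
            phipow \<phi> q (fpow f p x) = fpow f (ultra_add p q) x)
       \<and> (\<forall>h\<in>ellis_phi X \<phi>. \<forall>g\<in>ellis_star X f. h \<circ> g \<in> ellis_star X f)"
proof -
  note cX = assms(1) and inX = assms(3) and phX = assms(4) and ul = assms(5)
  have cphi: "continuous_on X \<phi>"
    by (rule uniform_limit_theorem[OF _ ul])
       (auto simp: eventually_sequentially intro!: exI[of _ 1] assms(2))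
  have uc: "uniformly_continuous_on X \<phi>" by (rule compact_uniformly_continuous[OF cphi cX])
  have P1: "phipow \<phi> q (fpow f p x) = fpow f (ultra_add p q) x \<and> fpow f p x \<in> X"
    if p: "p \<in> betaN_star" and q: "q \<in> betaN" and x: "x \<in> X" for p q x
  proof -
    have pb: "p \<noteq> bot" "\<And>P. eventually P p \<or> eventually (\<lambda>n. \<not> P n) p"
      and pf: "\<forall>n. eventually (\<lambda>m. m \<noteq> n) p"
      using p by (auto simp: betaN_star_def betaN_def)
    have qb: "q \<noteq> bot" "\<And>P. eventually P q \<or> eventually (\<lambda>n. \<not> P n) q"
      using q by (auto simp: betaN_def)
    have evz: "eventually (\<lambda>n. fcomp f n x \<in> X) p" using fcomp_in[of f X, OF inX x] by simp
    from ultra_lim_exists[OF cX pb(1) pb(2) evz]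
    obtain z where z: "z \<in> X" "((\<lambda>n. fcomp f n x) \<longlongrightarrow> z) p" by blast
    have fz: "fpow f p x = z" unfolding fpow_def by (rule tendsto_Lim[OF pb(1) z(2)])
    have evc: "eventually (\<lambda>n. (\<phi> ^^ n) z \<in> X) q" using funpow_in[OF phX z(1)] by simp
    from ultra_lim_exists[OF cX qb(1) qb(2) evc]
    obtain c where c: "c \<in> X" "((\<lambda>n. (\<phi> ^^ n) z) \<longlongrightarrow> c) q" by blast
    have pc: "phipow \<phi> q z = c" unfolding phipow_def by (rule tendsto_Lim[OF qb(1) c(2)])
    have lim: "((\<lambda>m. fcomp f (m + n) x) \<longlongrightarrow> (\<phi> ^^ n) z) p" for n
    proof (rule tendstoI)
      fix e :: real assume e: "e > 0"
      have t1: "((\<lambda>m. (\<phi> ^^ n) (fcomp f m x)) \<longlongrightarrow> (\<phi> ^^ n) z) p"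
        by (rule continuous_on_tendsto_compose[OF funpow_cont[OF phX cphi] z(2) z(1)])
           (simp add: fcomp_in[of f X, OF inX x])
      have e1: "eventually (\<lambda>m. dist ((\<phi> ^^ n) (fcomp f m x)) ((\<phi> ^^ n) z) < e/2) p"
        using t1 e tendstoD half_gt_zero by blast
      have e2: "eventually (\<lambda>m. \<forall>y\<in>X. dist (blk f m n y) ((\<phi> ^^ n) y) < e/2) p"
        using free_ev[OF pf blk_unif[of f X, OF inX phX uc ul]] e half_gt_zero by blast
      show "eventually (\<lambda>m. dist (fcomp f (m + n) x) ((\<phi> ^^ n) z) < e) p"
        using e1 e2
      proof eventually_elim
        case (elim m)
        have "dist (blk f m n (fcomp f m x)) ((\<phi> ^^ n) z) \<le> dist (blk f m n (fcomp f m x)) ((\<phi> ^^ n) (fcomp f m x)) + dist ((\<phi> ^^ n) (fcomp f m x)) ((\<phi> ^^ n) z)"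
          by (rule dist_triangle)
        moreover have "dist (blk f m n (fcomp f m x)) ((\<phi> ^^ n) (fcomp f m x)) < e/2"
          using elim(2) fcomp_in[of f X, OF inX x] by blast
        ultimately show ?case using elim(1) by (simp add: fcomp_blk)
      qed
    qed
    have "((\<lambda>k. fcomp f k x) \<longlongrightarrow> c) (ultra_add p q)"
      by (rule tendsto_ultra_add[OF lim c(2)])
    then have "fpow f (ultra_add p q) x = c" unfolding fpow_def
      by (rule tendsto_Lim[rotated]) (rule ultra_add_not_bot[OF pb(1) qb(1)])
    with fz pc z(1) show ?thesis by simp
  qed
  have P2: "h \<circ> g \<in> ellis_star X f" if h: "h \<in> ellis_phi X \<phi>" and g: "g \<in> ellis_star X f" for h g
  proof -
    obtain p where p: "p \<in> betaN_star" and gp: "\<And>x. x \<in> X \<Longrightarrow> g x = fpow f p x"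
      using g by (auto simp: ellis_star_def)
    define N where "N S e = {n::nat. n \<ge> 1 \<and> (\<forall>x\<in>S. dist (h x) ((\<phi> ^^ n) x) < e)}" for S e
    define B where "B P \<longleftrightarrow> (\<exists>S e. finite S \<and> S \<subseteq> X \<and> e > 0 \<and> (\<forall>n\<in>N S e. P n))" for P
    have isf: "is_filter B"
    proof (rule is_filter.intro)
      show "B (\<lambda>x. True)" unfolding B_def by (intro exI[of _ "{}"] exI[of _ 1]) auto
    next
      fix P Q assume "B P" "B Q"
      then obtain S1 e1 S2 e2 where 1: "finite S1" "S1 \<subseteq> X" "e1 > 0" "\<forall>n\<in>N S1 e1. P n"
        and 2: "finite S2" "S2 \<subseteq> X" "e2 > 0" "\<forall>n\<in>N S2 e2. Q n" unfolding B_def by blast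
      show "B (\<lambda>x. P x \<and> Q x)" unfolding B_def
        by (intro exI[of _ "S1 \<union> S2"] exI[of _ "min e1 e2"]) (use 1 2 in \<open>auto simp: N_def\<close>)
    next
      fix P Q assume "\<forall>x. P x \<longrightarrow> Q x" "B P" then show "B Q" unfolding B_def by blast
    qed
    define Fb where "Fb = Abs_filter B"
    have evFb: "eventually P Fb \<longleftrightarrow> B P" for P
      unfolding Fb_def by (simp add: eventually_Abs_filter isf)
    have "Fb \<noteq> bot"
    proof
      assume "Fb = bot"
      then have "B (\<lambda>x. False)" using evFb by (metis eventually_bot)
      then obtain S e where "finite S" "S \<subseteq> X" "e > 0" "N S e = {}" unfolding B_def by auto
      with h show False unfolding ellis_phi_def N_def by blast
    qed
    then obtain q where qF: "q \<le> Fb" and qb: "q \<noteq> bot" "\<And>P. eventually P q \<or> eventually (\<lambda>x. \<not> P x) q"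
      using ex_ultra by blast
    have qev: "B P \<Longrightarrow> eventually P q" for P using qF evFb by (simp add: le_filter_def)
    have "B (\<lambda>n. n \<ge> 1)" unfolding B_def N_def
      by (rule exI[of _ "{}"], rule exI[of _ 1]) auto
    then have q1: "eventually (\<lambda>n. n \<ge> 1) q" by (rule qev)
    have q: "q \<in> betaN"
      unfolding betaN_def using qb q1 by blast
    have hq: "h x = phipow \<phi> q x" if x: "x \<in> X" for x
    proof -
      have "((\<lambda>n. (\<phi> ^^ n) x) \<longlongrightarrow> h x) q"
      proof (rule tendstoI)
        fix e :: real assume "e > 0"
        then show "eventually (\<lambda>n. dist ((\<phi> ^^ n) x) (h x) < e) q"
          using x by (intro qev) (auto simp: B_def N_def dist_commute intro!: exI[of _ "{x}"] exI[of _ e])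
      qed
      then show ?thesis unfolding phipow_def using qb(1) by (simp add: tendsto_Lim)
    qed
    have pb: "p \<noteq> bot" "\<And>P. eventually P p \<or> eventually (\<lambda>n. \<not> P n) p"
      and pf: "\<forall>n. eventually (\<lambda>m. m \<noteq> n) p" and p1: "eventually (\<lambda>n. n \<ge> 1) p"
      using p by (auto simp: betaN_star_def betaN_def)
    have r: "ultra_add p q \<in> betaN_star"
      unfolding betaN_star_def betaN_def
    proof (intro CollectI conjI allI)
      show "ultra_add p q \<noteq> bot" by (rule ultra_add_not_bot[OF pb(1) qb(1)])
      fix P
      show "eventually P (ultra_add p q) \<or> eventually (\<lambda>n. \<not> P n) (ultra_add p q)"
      proof -
        have "eventually (\<lambda>n. eventually (\<lambda>m. P (m + n)) p) q \<or> eventually (\<lambda>n. \<not> eventually (\<lambda>m. P (m + n)) p) q"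
          using qb(2) .
        moreover have "\<not> eventually (\<lambda>m. P (m + n)) p \<Longrightarrow> eventually (\<lambda>m. \<not> P (m + n)) p" for n
          using pb(2) by blast
        ultimately show ?thesis unfolding eventually_ultra_add
          by (metis (mono_tags, lifting) eventually_mono)
      qed
    next
      show "eventually (\<lambda>n. n \<ge> 1) (ultra_add p q)" unfolding eventually_ultra_add
      proof (rule always_eventually, intro allI)
        fix n show "eventually (\<lambda>m. 1 \<le> m + n) p" by (rule eventually_mono[OF p1]) simp
      qed
    next
      fix k
      show "eventually (\<lambda>m. m \<noteq> k) (ultra_add p q)" unfolding eventually_ultra_add
      proof (rule always_eventually, rule allI)
        fix n
        show "eventually (\<lambda>m. m + n \<noteq> k) p"
        proof (cases "n \<le> k")
          case True show ?thesis by (rule eventually_mono[OF pf[rule_format, of "k - n"]]) (use True in auto)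
        next
          case False then show ?thesis by simp
        qed
      qed
    qed
    show ?thesis unfolding ellis_star_def
    proof (intro CollectI bexI[OF _ r] ballI)
      fix x assume x: "x \<in> X"
      have "fpow f p x \<in> X" using P1[OF p q x] by simp
      then show "(h \<circ> g) x = fpow f (ultra_add p q) x"
        using P1[OF p q x] hq gp x by simp
    qed
  qed
  show ?thesis using P1 P2 by blast
qed

end
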